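(* Let $(\alpha_n)_{n\ge0}$ be a sequence of positive numbers and $\rho>1$. Let $(Y_n)_{n\ge1}$ be i.i.d. with $\mathbb{P}(Y_1<0)>0$ and $\mathbb{P}(Y_1\ge x)\precsim(\log x)^{-\alpha}$ as $x\to\infty$ for some $\alpha>1$. Let $X_n:=\sum_{k=1}^n\rho^{n-k}\alpha_{n-k}Y_k$. (1) If $(\alpha_n)$ is nondecreasing, there is a constant $c>0$ such that $\mathbb{P}\big(\bigcap_{n=1}^\infty\{X_n\le-c\,\alpha_{n-1}\rho^{n-1}\}\big)>0$. (2) If $0<l\le\alpha_n\le u<\infty$ for all $n\ge0$, there is a constant $c>0$ such that $\mathbb{P}\big(\bigcap_{n=1}^\infty\{X_n\le-c\,\rho^{n-1}\}\big)>0$.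
   Context: $f\precsim g$ as $x\to\infty$ means $\limsup_{x\to\infty}f(x)/g(x)<\infty$. *)

theory Defs
  imports "HOL-Probability.Probability" "HOL-Library.Landau_Symbols"
begin

definition Xseq :: "real \<Rightarrow> (nat \<Rightarrow> real) \<Rightarrow> (nat \<Rightarrow> 'a \<Rightarrow> real) \<Rightarrow> nat \<Rightarrow> 'a \<Rightarrow> real" where
  "Xseq \<rho> a Y n \<omega> = (\<Sum>k=1..n. \<rho> ^ (n - k) * a (n - k) * Y k \<omega>)"

end

theory Submission
  imports Defs
begin


lemma (in prob_space) indep_prod:
  fixes Y :: "nat \<Rightarrow> 'a \<Rightarrow> real" and b :: "nat \<Rightarrow> real"
  assumes "indep_vars (\<lambda>_. borel) Y {1..}" "finite J" "J \<subseteq> {1..}" "J \<noteq> {}"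
  shows "prob (\<Inter>k\<in>J. Y k -` {..b k} \<inter> space M) = (\<Prod>k\<in>J. prob (Y k -` {..b k} \<inter> space M))"
proof -
  have I: "indep_sets (\<lambda>i. { Y i -` A \<inter> space M | A. A \<in> sets borel}) {1..}"
    using assms(1) unfolding indep_vars_def2 by (rule conjunct2)
  have mem: "(\<lambda>k. Y k -` {..b k} \<inter> space M) \<in> Pi J (\<lambda>i. { Y i -` A \<inter> space M | A. A \<in> sets borel})"
  proof (rule Pi_I)
    fix x show "Y x -` {..b x} \<inter> space M \<in> { Y x -` A \<inter> space M | A. A \<in> sets borel}"
      by (rule CollectI, rule exI[of _ "{..b x}"]) auto
  qed
  show ?thesis
    using I[unfolded indep_sets_def, THEN conjunct2, rule_format, OF assms(3) assms(4) assms(2) mem] .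
qed

lemma weier:
  fixes x :: "nat \<Rightarrow> real"
  assumes "finite J" "\<And>k. k \<in> J \<Longrightarrow> 0 \<le> x k \<and> x k \<le> 1"
  shows "1 - (\<Sum>k\<in>J. 1 - x k) \<le> (\<Prod>k\<in>J. x k)"
  using assms
proof (induction J rule: finite_induct)
  case empty then show ?case by simp
next
  case (insert a F)
  have IH: "1 - (\<Sum>k\<in>F. 1 - x k) \<le> (\<Prod>k\<in>F. x k)" using insert by auto
  have xa: "0 \<le> x a" "x a \<le> 1" using insert by auto
  have S: "(\<Sum>k\<in>F. 1 - x k) \<ge> 0" using insert by (intro sum_nonneg) auto
  have "x a * (1 - (\<Sum>k\<in>F. 1 - x k)) \<le> x a * (\<Prod>k\<in>F. x k)"
    using IH xa by (intro mult_left_mono) auto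
  moreover have "1 - ((1 - x a) + (\<Sum>k\<in>F. 1 - x k)) \<le> x a * (1 - (\<Sum>k\<in>F. 1 - x k))"
    using xa S by (simp add: algebra_simps mult_left_le_one_le)
  ultimately show ?case using insert by simp
qed

lemma tail_small:
  fixes f :: "nat \<Rightarrow> real"
  assumes "summable f" "\<And>k. f k \<ge> 0" "\<epsilon> > 0"
  shows "\<exists>K. \<forall>K'\<ge>K. \<forall>N. sum f {K'<..N} \<le> \<epsilon>"
proof -
  have "(\<lambda>n. \<Sum>i<n. f i) \<longlonglongrightarrow> suminf f" using summable_LIMSEQ[OF assms(1)] .
  then have "eventually (\<lambda>n. dist (\<Sum>i<n. f i) (suminf f) < \<epsilon>) sequentially"
    using assms(3) by (rule tendstoD)
  then obtain K where K: "\<And>n. n \<ge> K \<Longrightarrow> dist (\<Sum>i<n. f i) (suminf f) < \<epsilon>"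
    by (auto simp: eventually_sequentially)
  show ?thesis
  proof (intro exI allI impI)
    fix K' N assume "K' \<ge> K"
    show "sum f {K'<..N} \<le> \<epsilon>"
    proof (cases "K' < N")
      case False then show ?thesis using assms by simp
    next
      case True
      have split: "{..<Suc N} = {..<Suc K'} \<union> {K'<..N}" using True by auto
      have "(\<Sum>i<Suc N. f i) = (\<Sum>i<Suc K'. f i) + sum f {K'<..N}"
        unfolding split by (subst sum.union_disjoint) auto
      moreover have "(\<Sum>i<Suc N. f i) \<le> suminf f"
        using assms by (intro sum_le_suminf) auto
      moreover have "dist (\<Sum>i<Suc K'. f i) (suminf f) < \<epsilon>" using K[of "Suc K'"] \<open>K' \<ge> K\<close> le_SucI by blast
      ultimately show ?thesis by (auto simp: dist_real_def)
    qed
  qed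
qed

lemma (in prob_space) core:
  fixes Y :: "nat \<Rightarrow> 'a \<Rightarrow> real" and a :: "nat \<Rightarrow> real" and \<rho> \<alpha> L :: real
  assumes a_pos: "\<And>n. a n > 0"
    and rho: "\<rho> > 1"
    and rv: "\<And>n. n \<ge> 1 \<Longrightarrow> Y n \<in> borel_measurable M"
    and indep: "indep_vars (\<lambda>_. borel) Y {1..}"
    and ident: "\<And>n. n \<ge> 1 \<Longrightarrow> distr M borel (Y n) = distr M borel (Y 1)"
    and neg: "prob {\<omega> \<in> space M. Y 1 \<omega> < 0} > 0"
    and alpha: "\<alpha> > 1"
    and tail: "(\<lambda>x. prob {\<omega> \<in> space M. Y 1 \<omega> \<ge> x}) \<in> O[at_top](\<lambda>x. ln x powr (- \<alpha>))"
    and L: "L > 0" and aL: "\<And>n k. k \<le> n \<Longrightarrow> a k \<le> L * a n"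
  shows "\<exists>c>0. prob {\<omega> \<in> space M. \<forall>n\<ge>1. Xseq \<rho> a Y n \<omega> \<le> - c * a (n - 1) * \<rho> ^ (n - 1)} > 0"
proof -
  have identp: "prob (Y k -` B \<inter> space M) = prob (Y 1 -` B \<inter> space M)"
    if "k \<ge> 1" "B \<in> sets borel" for k B
  proof -
    have "prob (Y k -` B \<inter> space M) = measure (distr M borel (Y k)) B"
      using rv[OF that(1)] that(2) by (simp add: measure_distr)
    also have "\<dots> = measure (distr M borel (Y 1)) B" using ident[OF that(1)] by simp
    also have "\<dots> = prob (Y 1 -` B \<inter> space M)"
      using rv[of 1] that(2) by (simp add: measure_distr)
    finally show ?thesis .
  qed
  have "\<exists>d>0. prob (Y 1 -` {..-d} \<inter> space M) > 0"
  proof (rule ccontr)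
    assume nd: "\<not> ?thesis"
    have z: "prob (Y 1 -` {..-(1/Suc m)} \<inter> space M) = 0" for m
    proof -
      have "\<not> prob (Y 1 -` {..-(1/Suc m)} \<inter> space M) > 0" using nd by auto
      then show ?thesis using measure_nonneg[of M "Y 1 -` {..-(1/Suc m)} \<inter> space M"] by linarith
    qed
    have nul: "Y 1 -` {..-(1/Suc m)} \<inter> space M \<in> null_sets M" for m
      using z[of m] measurable_sets[OF rv[of 1]] by (intro null_setsI) (auto simp: emeasure_eq_measure)
    have "(\<Union>m. Y 1 -` {..-(1/Suc m)} \<inter> space M) \<in> null_sets M"
      using nul by (intro null_sets_UN) auto
    moreover have "{\<omega> \<in> space M. Y 1 \<omega> < 0} \<subseteq> (\<Union>m. Y 1 -` {..-(1/Suc m)} \<inter> space M)"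
    proof
      fix \<omega> assume "\<omega> \<in> {\<omega> \<in> space M. Y 1 \<omega> < 0}"
      then have w: "\<omega> \<in> space M" "Y 1 \<omega> < 0" by auto
      then obtain m where "inverse (real (Suc m)) < - Y 1 \<omega>"
        using reals_Archimedean[of "- Y 1 \<omega>"] by auto
      then show "\<omega> \<in> (\<Union>m. Y 1 -` {..-(1/Suc m)} \<inter> space M)" using w
        by (auto simp: field_simps intro!: exI[of _ m])
    qed
    moreover have "{\<omega> \<in> space M. Y 1 \<omega> < 0} \<in> sets M" using rv[of 1] by measurable
    ultimately have "{\<omega> \<in> space M. Y 1 \<omega> < 0} \<in> null_sets M"
      using null_sets_subset by blast
    then have "prob {\<omega> \<in> space M. Y 1 \<omega> < 0} = 0"
      by (simp add: measure_eq_0_null_sets)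
    then show False using neg by simp
  qed
  then obtain d where d: "d > 0" "prob (Y 1 -` {..-d} \<inter> space M) > 0" by blast
  obtain C where C: "C > 0" and evC: "eventually (\<lambda>x. norm (prob {\<omega> \<in> space M. Y 1 \<omega> \<ge> x}) \<le> C * norm (ln x powr (- \<alpha>))) at_top"
    using landau_o.bigE[OF tail] by blast
  then obtain x0 where x0: "\<And>x. x \<ge> x0 \<Longrightarrow> prob {\<omega> \<in> space M. Y 1 \<omega> \<ge> x} \<le> C * \<bar>ln x powr (- \<alpha>)\<bar>"
    by (auto simp: eventually_at_top_linorder)
  define s where "s = sqrt \<rho>"
  have s1: "s > 1" using rho by (simp add: s_def)
  have s2: "s * s = \<rho>" using rho by (simp add: s_def)
  define p where "p k = prob {\<omega> \<in> space M. Y 1 \<omega> \<ge> s ^ k}" for k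
  obtain k0 where k0: "\<And>k. k \<ge> k0 \<Longrightarrow> x0 < s ^ k"
    using Archimedean_eventually_pow[OF s1, of x0] by (auto simp: eventually_sequentially)
  have sump: "summable p"
  proof (rule summable_comparison_test')
    show "summable (\<lambda>k. C * (ln s powr (- \<alpha>)) * real k powr (- \<alpha>))"
      using alpha by (intro summable_mult) (simp add: summable_real_powr_iff)
    fix k assume "k \<ge> max k0 1"
    then have k: "k \<ge> k0" "k \<ge> 1" by auto
    have lnpos: "ln (s ^ k) = real k * ln s" using s1 by (simp add: ln_realpow)
    have "ln s > 0" using s1 by simp
    then have "\<bar>ln (s ^ k) powr (- \<alpha>)\<bar> = (ln s powr (- \<alpha>)) * real k powr (- \<alpha>)"
      using k lnpos by (simp add: powr_mult)
    then show "norm (p k) \<le> C * (ln s powr (- \<alpha>)) * real k powr (- \<alpha>)"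
      using x0[of "s ^ k"] k0[OF k(1)] by (simp add: p_def)
  qed
  have p0: "p k \<ge> 0" for k by (simp add: p_def)
  define r where "r = 1 / s"
  have r: "0 < r" "r < 1" using s1 by (auto simp: r_def)
  have sumr: "summable (\<lambda>k. r ^ k)" using r by (intro summable_geometric) auto
  define \<epsilon> where "\<epsilon> = d / (2 * L * \<rho>)"
  have \<epsilon>: "\<epsilon> > 0" using d L rho by (simp add: \<epsilon>_def)
  obtain K1 where K1: "\<And>K'. K' \<ge> K1 \<Longrightarrow> sum (\<lambda>k. r ^ k) {K'<..N} \<le> \<epsilon>" for N
    using tail_small[OF sumr _ \<epsilon>] r by (metis less_eq_real_def zero_le_power)
  obtain K2 where K2: "\<And>K'. K' \<ge> K2 \<Longrightarrow> sum p {K'<..N} \<le> 1/2" for N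
    using tail_small[OF sump p0, of "1/2"] by auto
  define K where "K = max K1 K2 + 1"
  have K: "K \<ge> 1" "\<And>N. sum (\<lambda>k. r ^ k) {K<..N} \<le> \<epsilon>" "\<And>N. sum p {K<..N} \<le> 1/2"
    using K1 K2 by (auto simp: K_def)
  define b where "b k = (if k = 1 then -d else if k \<le> K then 0 else s ^ k)" for k
  define A where "A k = Y k -` {..b k} \<inter> space M" for k
  define \<pi> where "\<pi> k = prob (Y 1 -` {..b k} \<inter> space M)" for k
  have Aev: "A k \<in> events" if "k \<ge> 1" for k
    unfolding A_def using rv[OF that] by (intro measurable_sets) auto
  have Apr: "prob (A k) = \<pi> k" if "k \<ge> 1" for k
    unfolding A_def \<pi>_def using identp[OF that] by auto
  have \<pi>pos: "\<pi> k > 0" if "k \<le> K" for k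
  proof -
    have "0 \<le> s ^ k" using s1 by simp
    then have "b k \<ge> -d" using d by (auto simp: b_def)
    then have "prob (Y 1 -` {..-d} \<inter> space M) \<le> \<pi> k"
      unfolding \<pi>_def using rv[of 1] by (intro finite_measure_mono measurable_sets) auto
    then show ?thesis using d by simp
  qed
  have \<pi>le: "\<pi> k \<le> 1" for k unfolding \<pi>_def by simp
  have \<pi>tail: "1 - p k \<le> \<pi> k" if "k > K" for k
  proof -
    have ev: "{\<omega> \<in> space M. Y 1 \<omega> \<ge> s ^ k} \<in> events" using rv[of 1] by measurable
    have "space M - {\<omega> \<in> space M. Y 1 \<omega> \<ge> s ^ k} \<subseteq> Y 1 -` {..b k} \<inter> space M"
      using that K(1) by (auto simp: b_def)
    then have "prob (space M - {\<omega> \<in> space M. Y 1 \<omega> \<ge> s ^ k}) \<le> \<pi> k"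
      unfolding \<pi>_def using rv[of 1] by (intro finite_measure_mono measurable_sets) auto
    then show ?thesis using prob_compl[OF ev] by (simp add: p_def)
  qed
  define Q where "Q = (\<Prod>k\<in>{1..K}. \<pi> k)"
  have Q: "Q > 0" unfolding Q_def using \<pi>pos by (intro prod_pos) auto
  define H where "H n = (\<Inter>k\<in>{1..n+K}. A k)" for n
  have Hev: "H n \<in> events" for n
    unfolding H_def using Aev K(1) by (intro sets.finite_INT) auto
  have Hpr: "prob (H n) \<ge> Q / 2" for n
  proof -
    have "prob (H n) = (\<Prod>k\<in>{1..n+K}. prob (A k))"
      unfolding H_def A_def using K(1) by (intro indep_prod[OF indep]) auto
    also have "\<dots> = (\<Prod>k\<in>{1..n+K}. \<pi> k)" using Apr by (intro prod.cong) auto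
    also have "{1..n+K} = {1..K} \<union> {K<..n+K}" using K(1) by auto
    also have "(\<Prod>k\<in>{1..K} \<union> {K<..n+K}. \<pi> k) = Q * (\<Prod>k\<in>{K<..n+K}. \<pi> k)"
      unfolding Q_def by (subst prod.union_disjoint) auto
    finally have eq: "prob (H n) = Q * (\<Prod>k\<in>{K<..n+K}. \<pi> k)" .
    have "1 - (\<Sum>k\<in>{K<..n+K}. 1 - \<pi> k) \<le> (\<Prod>k\<in>{K<..n+K}. \<pi> k)"
      by (intro weier) (auto simp: \<pi>_def)
    moreover have "(\<Sum>k\<in>{K<..n+K}. 1 - \<pi> k) \<le> sum p {K<..n+K}"
      using \<pi>tail by (intro sum_mono) (auto simp: algebra_simps)
    ultimately have "(\<Prod>k\<in>{K<..n+K}. \<pi> k) \<ge> 1/2" using K(3)[of "n+K"] by linarith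
    then show ?thesis using eq Q by (simp add: mult_left_mono[of "1/2" _ Q, simplified])
  qed
  have dec: "decseq H" unfolding decseq_def H_def by auto
  have lim: "(\<lambda>n. prob (H n)) \<longlonglongrightarrow> prob (\<Inter>n. H n)"
    using Hev dec by (intro Lim_measure_decseq) auto
  have G: "prob (\<Inter>n. H n) \<ge> Q / 2"
    using Hpr by (intro LIMSEQ_le_const[OF lim]) auto
  define c where "c = d / 2"
  define T where "T = {\<omega> \<in> space M. \<forall>n\<ge>1. Xseq \<rho> a Y n \<omega> \<le> - c * a (n - 1) * \<rho> ^ (n - 1)}"
  have Xm: "(\<lambda>\<omega>. Xseq \<rho> a Y n \<omega>) \<in> borel_measurable M" for n
    unfolding Xseq_def using rv by (intro borel_measurable_sum borel_measurable_times borel_measurable_const) auto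
  have Tev: "T \<in> events"
  proof -
    have "T = (\<Inter>n\<in>{1..}. {\<omega> \<in> space M. Xseq \<rho> a Y n \<omega> \<le> - c * a (n - 1) * \<rho> ^ (n - 1)}) \<inter> space M"
      unfolding T_def by auto
    also have "\<dots> \<in> events"
      using Xm by (intro sets.Int sets.countable_INT') (auto intro: borel_measurable_le)
    finally show ?thesis .
  qed
  have sub: "(\<Inter>n. H n) \<subseteq> T"
  proof
    fix \<omega> assume w: "\<omega> \<in> (\<Inter>n. H n)"
    have wk: "Y k \<omega> \<le> b k" if "k \<ge> 1" for k
    proof -
      have "\<omega> \<in> H k" using w by auto
      then have "\<omega> \<in> A k" unfolding H_def using that by auto
      then show ?thesis by (auto simp: A_def)
    qed
    have ws: "\<omega> \<in> space M"
    proof -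
      have "\<omega> \<in> H 0" using w by auto
      then have "\<omega> \<in> A 1" unfolding H_def using K(1) by auto
      then show ?thesis by (auto simp: A_def)
    qed
    show "\<omega> \<in> T" unfolding T_def
    proof (intro CollectI conjI allI impI ws)
      fix n :: nat assume n: "n \<ge> 1"
      define Z where "Z = L * a (n-1) * \<rho> ^ n"
      have Z0: "Z \<ge> 0" unfolding Z_def using L a_pos[of "n-1"] rho by simp
      have "{1..n} = insert 1 {2..n}" using n by auto
      then have split: "Xseq \<rho> a Y n \<omega> = \<rho>^(n-1)*a(n-1)*Y 1 \<omega> + (\<Sum>k\<in>{2..n}. \<rho>^(n-k)*a(n-k)*Y k \<omega>)"
        unfolding Xseq_def by simp
      have coef: "\<rho>^m * a m' \<ge> 0" for m m' using rho a_pos[of m'] by simp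
      have t1: "\<rho>^(n-1)*a(n-1)*Y 1 \<omega> \<le> \<rho>^(n-1)*a(n-1)*(-d)"
        using wk[of 1] by (intro mult_left_mono coef) (auto simp: b_def)
      have tk: "\<rho>^(n-k)*a(n-k)*Y k \<omega> \<le> (if K<k then Z * r^k else 0)" if k: "k \<in> {2..n}" for k
      proof (cases "K < k")
        case True
        have yk: "Y k \<omega> \<le> s ^ k" using wk[of k] k True by (auto simp: b_def)
        have id: "\<rho>^(n-k) * s^k = \<rho>^n * r^k"
        proof -
          have "\<rho>^n = \<rho>^(n-k) * \<rho>^k" using k by (simp add: power_add[symmetric])
          also have "\<rho>^k = s^k * s^k" using s2 by (metis power_mult_distrib)
          finally have "\<rho>^n * r^k = \<rho>^(n-k) * s^k * (s^k * r^k)" by (simp add: algebra_simps)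
          also have "s^k * r^k = 1" using s1 by (simp add: r_def power_one_over)
          finally show ?thesis by simp
        qed
        have "\<rho>^(n-k) * a(n-k) * Y k \<omega> \<le> \<rho>^(n-k) * a(n-k) * s^k"
          using yk by (intro mult_left_mono coef)
        also have "\<dots> \<le> \<rho>^(n-k)*(L*a(n-1))* s^k"
          using aL[of "n-k" "n-1"] k rho s1 by (intro mult_right_mono mult_left_mono) auto
        also have "\<dots> = Z * r^k" using id unfolding Z_def by (simp add: algebra_simps)
        finally show ?thesis using True by simp
      next
        case False
        have yk: "Y k \<omega> \<le> 0" using wk[of k] k False by (auto simp: b_def)
        show ?thesis using False coef[of "n-k" "n-k"] yk by (simp add: mult_nonneg_nonpos)
      qed
      have "(\<Sum>k\<in>{2..n}. \<rho>^(n-k)*a(n-k)*Y k \<omega>) \<le> (\<Sum>k\<in>{2..n}. if K<k then Z * r^k else 0)"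
        using tk by (intro sum_mono) auto
      also have "\<dots> = (\<Sum>k\<in>{k\<in>{2..n}. K<k}. Z * r^k)" by (rule sum.inter_filter[symmetric]) simp
      also have "{k\<in>{2..n}. K<k} = {K<..n}" using K(1) by auto
      also have "(\<Sum>k\<in>{K<..n}. Z * r^k) = Z * (\<Sum>k\<in>{K<..n}. r^k)" by (simp add: sum_distrib_left)
      also have "\<dots> \<le> Z * \<epsilon>" using K(2)[of n] Z0 by (intro mult_left_mono)
      finally have t2: "(\<Sum>k\<in>{2..n}. \<rho>^(n-k)*a(n-k)*Y k \<omega>) \<le> Z * \<epsilon>" .
      have "\<rho>^n = \<rho> * \<rho>^(n-1)" using n by (metis Suc_diff_1 less_le_trans power_Suc zero_less_one)
      then have Ze: "Z * \<epsilon> = a(n-1) * \<rho>^(n-1) * (d/2)"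
        unfolding Z_def \<epsilon>_def using L rho by (simp add: field_simps)
      show "Xseq \<rho> a Y n \<omega> \<le> - c * a (n - 1) * \<rho> ^ (n - 1)"
        using split t1 t2 Ze unfolding c_def by (simp add: algebra_simps)
    qed
  qed
  have "prob T \<ge> Q / 2" using G sub Tev by (meson finite_measure_mono order_trans)
  then show ?thesis using Q d by (intro exI[of _ c]) (auto simp: c_def T_def)
qed



theorem mainTheorem20:
  fixes M :: "'a measure" and Y :: "nat \<Rightarrow> 'a \<Rightarrow> real"
    and a :: "nat \<Rightarrow> real" and \<rho> \<alpha> :: real
  assumes "prob_space M"
    and a_pos: "\<And>n. a n > 0"
    and rho: "\<rho> > 1"
    and rv: "\<And>n. n \<ge> 1 \<Longrightarrow> Y n \<in> borel_measurable M"
    and indep: "prob_space.indep_vars M (\<lambda>_. borel) Y {1..}"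
    and ident: "\<And>n. n \<ge> 1 \<Longrightarrow> distr M borel (Y n) = distr M borel (Y 1)"
    and neg: "measure M {\<omega> \<in> space M. Y 1 \<omega> < 0} > 0"
    and alpha: "\<alpha> > 1"
    and tail: "(\<lambda>x. measure M {\<omega> \<in> space M. Y 1 \<omega> \<ge> x}) \<in> O[at_top](\<lambda>x. ln x powr (- \<alpha>))"
  shows "(mono a \<longrightarrow> (\<exists>c>0. measure M {\<omega> \<in> space M. \<forall>n\<ge>1.
              Xseq \<rho> a Y n \<omega> \<le> - c * a (n - 1) * \<rho> ^ (n - 1)} > 0))
       \<and> ((\<exists>l u. 0 < l \<and> (\<forall>n. l \<le> a n \<and> a n \<le> u)) \<longrightarrow>
            (\<exists>c>0. measure M {\<omega> \<in> space M. \<forall>n\<ge>1.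
              Xseq \<rho> a Y n \<omega> \<le> - c * \<rho> ^ (n - 1)} > 0))"

proof -
  interpret prob_space M by fact
  have P1: "mono a \<longrightarrow> (\<exists>c>0. measure M {\<omega> \<in> space M. \<forall>n\<ge>1.
              Xseq \<rho> a Y n \<omega> \<le> - c * a (n - 1) * \<rho> ^ (n - 1)} > 0)"
  proof
    assume "mono a"
    then have aL1: "\<And>n k. k \<le> n \<Longrightarrow> a k \<le> 1 * a n" by (simp add: monoD)
    show "\<exists>c>0. measure M {\<omega> \<in> space M. \<forall>n\<ge>1.
              Xseq \<rho> a Y n \<omega> \<le> - c * a (n - 1) * \<rho> ^ (n - 1)} > 0"
      by (rule core[where L=1]) (fact a_pos rho rv indep ident neg alpha tail aL1 zero_less_one)+
  qed
  have P2: "(\<exists>l u. 0 < l \<and> (\<forall>n. l \<le> a n \<and> a n \<le> u)) \<longrightarrow>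
            (\<exists>c>0. measure M {\<omega> \<in> space M. \<forall>n\<ge>1.
              Xseq \<rho> a Y n \<omega> \<le> - c * \<rho> ^ (n - 1)} > 0)"
  proof
    assume "\<exists>l u. 0 < l \<and> (\<forall>n. l \<le> a n \<and> a n \<le> u)"
    then obtain l u where lu: "0 < l" "\<And>n. l \<le> a n" "\<And>n. a n \<le> u" by blast
    have u: "u > 0" using lu(1) lu(2)[of 0] lu(3)[of 0] by simp
    have aL': "a k \<le> (u / l) * a n" if "k \<le> n" for n k
    proof -
      have "a k \<le> (u / l) * l" using lu by simp
      also have "\<dots> \<le> (u / l) * a n" using lu u by (intro mult_left_mono) auto
      finally show ?thesis .
    qed
    have ul: "u / l > 0" using u lu(1) by simp
    have "\<exists>c>0. prob {\<omega> \<in> space M. \<forall>n\<ge>1.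
              Xseq \<rho> a Y n \<omega> \<le> - c * a (n - 1) * \<rho> ^ (n - 1)} > 0"
      by (rule core[where L="u / l"]) (fact a_pos rho rv indep ident neg alpha tail ul aL')+
    then obtain c where c: "c > 0" and pos: "prob {\<omega> \<in> space M. \<forall>n\<ge>1.
              Xseq \<rho> a Y n \<omega> \<le> - c * a (n - 1) * \<rho> ^ (n - 1)} > 0"
      by blast
    define T' where "T' = {\<omega> \<in> space M. \<forall>n\<ge>1. Xseq \<rho> a Y n \<omega> \<le> - (c * l) * \<rho> ^ (n - 1)}"
    have Xm: "(\<lambda>\<omega>. Xseq \<rho> a Y n \<omega>) \<in> borel_measurable M" for n
      unfolding Xseq_def using rv by (intro borel_measurable_sum borel_measurable_times borel_measurable_const) auto
    have Tev: "T' \<in> events"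
    proof -
      have "T' = (\<Inter>n\<in>{1..}. {\<omega> \<in> space M. Xseq \<rho> a Y n \<omega> \<le> - (c * l) * \<rho> ^ (n - 1)}) \<inter> space M"
        unfolding T'_def by auto
      also have "\<dots> \<in> events"
        using Xm by (intro sets.Int sets.countable_INT') (auto intro: borel_measurable_le)
      finally show ?thesis .
    qed
    have "{\<omega> \<in> space M. \<forall>n\<ge>1. Xseq \<rho> a Y n \<omega> \<le> - c * a (n - 1) * \<rho> ^ (n - 1)} \<subseteq> T'"
    proof (unfold T'_def, safe)
      fix \<omega> and n :: nat assume h: "\<forall>n\<ge>1. Xseq \<rho> a Y n \<omega> \<le> - c * a (n - 1) * \<rho> ^ (n - 1)" and n: "1 \<le> n"
      have "c * l * \<rho> ^ (n - 1) \<le> c * a (n - 1) * \<rho> ^ (n - 1)"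
        using c lu(2)[of "n-1"] rho by (intro mult_right_mono mult_left_mono) auto
      moreover have "Xseq \<rho> a Y n \<omega> \<le> - c * a (n - 1) * \<rho> ^ (n - 1)" using h n by blast
      ultimately show "Xseq \<rho> a Y n \<omega> \<le> - (c * l) * \<rho> ^ (n - 1)" by (simp only: mult_minus_left)
    qed
    then have "prob T' > 0" using pos Tev by (meson finite_measure_mono less_le_trans)
    then show "\<exists>c>0. measure M {\<omega> \<in> space M. \<forall>n\<ge>1.
              Xseq \<rho> a Y n \<omega> \<le> - c * \<rho> ^ (n - 1)} > 0"
    proof -
      have "c * l > 0" using c lu(1) by simp
      then show ?thesis using \<open>prob T' > 0\<close> unfolding T'_def by blast
    qed
  qed
  show ?thesis using P1 P2 by blast
qed

end
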